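(* Let $P>0$ and let $\{\theta_l\}_{l=1}^\infty$ be i.i.d. $\mathrm{Uniform}(0,2\pi)$ random variables. For each integer $i\geq 0$ define $$\bar R(i):=\mathbb{E}\Big[\log\Big(1+\Big|\textstyle\sum_{l=1}^i e^{j\theta_l}\Big|^2P\Big)\Big]$$ (with the empty sum equal to $0$). Then $\bar R(i+1)>\bar R(i)$ for all $i\geq 0$, and $\lim_{i\to\infty}\bar R(i)=\infty$.
   Context: $\log$ is the logarithm in a fixed base. *)

theory Defs
  imports "HOL-Probability.Probability"
begin

definition Rbar :: "'a measure \<Rightarrow> (nat \<Rightarrow> 'a \<Rightarrow> real) \<Rightarrow> real \<Rightarrow> real \<Rightarrow> nat \<Rightarrow> real" where
  "Rbar M \<theta> b P i =
     (\<integral>\<omega>. log b (1 + (cmod (\<Sum>l=1..i. cis (\<theta> l \<omega>)))\<^sup>2 * P) \<partial>M)"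

end

theory Submission
  imports Defs "HOL-Complex_Analysis.Complex_Analysis" "HOL-Real_Asymp.Real_Asymp"
begin


lemma circle_has_integral:
  assumes hol: "g holomorphic_on ball 0 r" and r: "1 < r"
  shows "((\<lambda>t. g (cis t)) has_integral (2*pi) *\<^sub>R g 0) {0..2*pi}"
proof -
  have cont: "continuous_on (cball 0 1) g"
    using r by (intro continuous_on_subset[OF holomorphic_on_imp_continuous_on[OF hol]]) (auto simp: subset_iff)
  have hol1: "g holomorphic_on ball 0 1"
    using r by (intro holomorphic_on_subset[OF hol]) (auto simp: subset_iff)
  have "((\<lambda>u. g u/(u-0)) has_contour_integral (2 * of_real pi * \<i> * g 0)) (circlepath 0 1)"
    using Cauchy_integral_circlepath[OF cont hol1, of 0] by simp
  then have "((\<lambda>t. g (0 + 1 * cis t)/((0 + 1 * cis t) - 0) * 1 * \<i> * cis t) has_integral (2 * of_real pi * \<i> * g 0)) {0..2*pi}"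
    unfolding circlepath_def by (subst (asm) has_contour_integral_part_circlepath_iff) auto
  then have "((\<lambda>t. \<i> * g (cis t)) has_integral (2 * of_real pi * \<i> * g 0)) {0..2*pi}"
    by (rule has_integral_cong[THEN iffD1, rotated]) (simp add: cis_neq_zero)
  then have "((\<lambda>t. (-\<i>) * (\<i> * g (cis t))) has_integral (-\<i>) * (2 * of_real pi * \<i> * g 0)) {0..2*pi}"
    by (rule has_integral_mult_right)
  then show ?thesis by (simp add: scaleR_conv_of_real algebra_simps)
qed

lemma U_integral:
  fixes f :: "real \<Rightarrow> real"
  assumes cf: "continuous_on UNIV f"
  shows "integrable (uniform_measure lborel {0<..<2*pi}) f \<and>
         integral\<^sup>L (uniform_measure lborel {0<..<2*pi}) f = integral {0..2*pi} f / (2*pi)"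
proof -
  let ?A = "{0<..<2*pi}"
  have fm: "f \<in> borel_measurable borel"
    using cf by (simp add: borel_measurable_continuous_onI)
  have e: "emeasure lborel ?A = ennreal (2*pi)" by simp
  have d: "uniform_measure lborel ?A = density lborel (\<lambda>x. ennreal (indicator ?A x / (2*pi)))"
    unfolding uniform_measure_def e
  proof (intro density_cong)
    have "1 / ennreal (2*pi) = ennreal (1/(2*pi))"
      by (subst divide_ennreal[symmetric]) auto
    then show "AE x in lborel. indicator ?A x / ennreal (2 * pi) = ennreal (indicator ?A x / (2 * pi))"
      by (auto split: split_indicator)
  qed auto
  have si: "set_integrable lborel {0..2*pi} f"
    by (rule borel_integrable_atLeastAtMost') (rule continuous_on_subset[OF cf], simp)
  then have si': "set_integrable lborel ?A f"
    by (rule set_integrable_subset) auto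
  have int: "integrable lborel (\<lambda>x. (indicator ?A x / (2*pi)) *\<^sub>R f x)"
  proof -
    have int0: "integrable lborel (\<lambda>x. (1/(2*pi)) * (indicator ?A x *\<^sub>R f x))"
      using si' unfolding set_integrable_def by (intro integrable_mult_right)
    show ?thesis
      by (rule Bochner_Integration.integrable_cong[THEN iffD1, OF refl _ int0]) (auto split: split_indicator)
  qed
  have I1: "integrable (uniform_measure lborel ?A) f"
    unfolding d using int by (subst integrable_density) (auto simp: fm)
  have "integral\<^sup>L (uniform_measure lborel ?A) f = (\<integral>x. (indicator ?A x / (2*pi)) *\<^sub>R f x \<partial>lborel)"
    unfolding d by (subst integral_density) (auto simp: fm)
  also have "\<dots> = (LINT x:?A|lborel. f x) / (2*pi)"
  proof -
    have "(\<lambda>x. (indicator ?A x / (2*pi)) *\<^sub>R f x) = (\<lambda>x. (indicator ?A x *\<^sub>R f x) / (2*pi))"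
      by (auto simp: fun_eq_iff)
    then show ?thesis unfolding set_lebesgue_integral_def by (simp only: integral_divide_zero)
  qed
  also have "(LINT x:?A|lborel. f x) = (LBINT x=0..2*pi. f x)"
    by (subst interval_integral_Ioo) auto
  also have "\<dots> = integral {0..2*pi} f"
  proof -
    have "(LBINT x=ereal 0..ereal (2*pi). f x) = integral {0..2*pi} f"
      by (rule interval_integral_eq_integral) (auto simp: si)
    then show ?thesis by (simp add: zero_ereal_def)
  qed
  finally show ?thesis using I1 by blast
qed

lemma circle_mean:
  assumes hol: "g holomorphic_on ball 0 r" and r: "1 < r"
  shows "integrable (uniform_measure lborel {0<..<2*pi}) (\<lambda>t. Re (g (cis t))) \<and>
         integral\<^sup>L (uniform_measure lborel {0<..<2*pi}) (\<lambda>t. Re (g (cis t))) = Re (g 0)"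
proof -
  have cg: "continuous_on (ball 0 r) g"
    using hol by (rule holomorphic_on_imp_continuous_on)
  have c: "continuous_on UNIV (\<lambda>t. Re (g (cis t)))"
    by (intro continuous_intros continuous_on_compose2[OF cg]) (use r in auto)
  have "((\<lambda>t. Re (g (cis t))) has_integral Re ((2*pi) *\<^sub>R g 0)) {0..2*pi}"
    using has_integral_linear[OF circle_has_integral[OF hol r] bounded_linear_Re] by (simp add: o_def)
  then have "integral {0..2*pi} (\<lambda>t. Re (g (cis t))) = 2*pi * Re (g 0)"
    by (simp add: integral_unique)
  with U_integral[OF c] show ?thesis by simp
qed

lemma cmod_add_cis_sq:
  "(cmod (s + cis t))\<^sup>2 = (cmod s)\<^sup>2 + 1 + 2 * (Re s * cos t + Im s * sin t)"
proof -
  have "(cmod (s + cis t))\<^sup>2 = (Re s + cos t)\<^sup>2 + (Im s + sin t)\<^sup>2"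
    by (simp add: cmod_power2)
  also have "\<dots> = (Re s)\<^sup>2 + (Im s)\<^sup>2 + ((sin t)\<^sup>2 + (cos t)\<^sup>2) + 2 * (Re s * cos t + Im s * sin t)"
    by (simp add: power2_eq_square algebra_simps)
  finally show ?thesis by (simp add: cmod_power2)
qed

lemma circle_sq:
  "integrable (uniform_measure lborel {0<..<2*pi}) (\<lambda>t. (cmod (s + cis t))\<^sup>2) \<and>
   integral\<^sup>L (uniform_measure lborel {0<..<2*pi}) (\<lambda>t. (cmod (s + cis t))\<^sup>2) = (cmod s)\<^sup>2 + 1"
proof -
  define g where "g = (\<lambda>z. of_real ((cmod s)\<^sup>2 + 1) + 2 * cnj s * z)"
  have hol: "g holomorphic_on ball 0 2" unfolding g_def by (intro holomorphic_intros)
  have eq: "(\<lambda>t. (cmod (s + cis t))\<^sup>2) = (\<lambda>t. Re (g (cis t)))"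
    by (auto simp: fun_eq_iff g_def cmod_add_cis_sq)
  show ?thesis unfolding eq using circle_mean[OF hol] by (simp add: g_def)
qed

lemma circle_four:
  "integrable (uniform_measure lborel {0<..<2*pi}) (\<lambda>t. ((cmod (s + cis t))\<^sup>2)\<^sup>2) \<and>
   integral\<^sup>L (uniform_measure lborel {0<..<2*pi}) (\<lambda>t. ((cmod (s + cis t))\<^sup>2)\<^sup>2) = ((cmod s)\<^sup>2 + 1)\<^sup>2 + 2 * (cmod s)\<^sup>2"
proof -
  define a where "a = (cmod s)\<^sup>2"
  define g where "g = (\<lambda>z. of_real ((a + 1)\<^sup>2 + 2 * a) + 4 * of_real (a + 1) * cnj s * z + 2 * (cnj s)\<^sup>2 * z\<^sup>2)"
  have hol: "g holomorphic_on ball 0 2" unfolding g_def by (intro holomorphic_intros)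
  have eq: "((cmod (s + cis t))\<^sup>2)\<^sup>2 = Re (g (cis t))" for t
  proof -
    have sc: "(sin t)\<^sup>2 + (cos t)\<^sup>2 = 1" by simp
    have ha: "a = (Re s)\<^sup>2 + (Im s)\<^sup>2" by (simp add: a_def cmod_power2)
    show ?thesis unfolding cmod_add_cis_sq a_def[symmetric]
      using sc ha by (simp add: g_def power2_eq_square cos_double sin_double Re_power2) algebra
  qed
  show ?thesis unfolding eq using circle_mean[OF hol] by (simp add: g_def a_def)
qed

lemma circle_log:
  assumes b: "1 < b" and P: "0 < P"
  shows "integrable (uniform_measure lborel {0<..<2*pi}) (\<lambda>t. log b (1 + (cmod (s + cis t))\<^sup>2 * P)) \<and>
   integral\<^sup>L (uniform_measure lborel {0<..<2*pi}) (\<lambda>t. log b (1 + (cmod (s + cis t))\<^sup>2 * P)) > log b (1 + (cmod s)\<^sup>2 * P)"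
proof -
  define m where "m = cmod s"
  define a where "a = m\<^sup>2"
  define A where "A = 1 + P + P * a"
  define D where "D = A\<^sup>2 - 4 * P\<^sup>2 * a"
  have D_eq: "D = (1 + P * a - P)\<^sup>2 + 4 * P"
    unfolding D_def A_def by (simp add: power2_eq_square algebra_simps)
  have D0: "D > 0" using D_eq P by (smt (verit) zero_le_power2)
  define T where "T = (A + sqrt D) / 2"
  have q2: "(sqrt D)\<^sup>2 = D" using D0 by simp
  have quad: "T * T - A * T + P\<^sup>2 * a = 0"
    unfolding T_def using q2 unfolding D_def by (simp add: field_simps power2_eq_square)
  have "1 + P * a - P < sqrt D"
    using D_eq P by (intro real_less_rsqrt) simp
  then have T_gt: "T > 1 + P * a" unfolding T_def A_def by simp
  have m0: "m \<ge> 0" unfolding m_def by simp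
  have "A - 2 * P * m = 1 + P * (m - 1)\<^sup>2"
    unfolding A_def a_def by (simp add: power2_eq_square algebra_simps)
  then have "A > 2 * P * m" using P by (smt (verit) mult_nonneg_nonneg zero_le_power2)
  moreover have "sqrt D \<ge> 0" using D0 by simp
  ultimately have TPm: "T > P * m" unfolding T_def add_divide_distrib using mult.assoc[of 2 P m] by linarith
  have "P * a \<ge> 0" using P unfolding a_def by simp
  then have T0: "T > 0" using T_gt by linarith
  define w where "w = of_real (P / T) * cnj s"
  have nw: "cmod w = P * m / T" unfolding w_def m_def using P T0 by (simp add: norm_mult norm_divide)
  have w1: "cmod w < 1" unfolding nw using TPm T0 by simp
  define r where "r = 2 / (1 + cmod w)"
  have pos: "1 + cmod w > 0" using norm_ge_zero[of w] by linarith
  have r1: "1 < r" unfolding r_def using w1 pos by (simp add: less_divide_eq)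
  have wz: "cmod (w * z) < 1" if "z \<in> ball 0 r" for z
  proof -
    have "cmod z < r" using that by simp
    then have "cmod w * cmod z \<le> cmod w * r" by (intro mult_left_mono) auto
    also have "cmod w * r < 1" unfolding r_def using w1 pos by (simp add: divide_less_eq)
    finally show ?thesis by (simp add: norm_mult)
  qed
  have Re_pos: "Re (1 + w * z) > 0" if "cmod (w * z) < 1" for z
    using that abs_Re_le_cmod[of "w*z"] by simp
  define g where "g = (\<lambda>z. of_real (log b T) + of_real (2 / ln b) * Ln (1 + w * z))"
  have hol: "g holomorphic_on ball 0 r"
    unfolding g_def
  proof (intro holomorphic_intros)
    fix z :: complex assume "z \<in> ball 0 r"
    then have "Re (1 + w * z) > 0" using wz Re_pos by blast
    then show "1 + w * z \<notin> \<real>\<^sub>\<le>\<^sub>0" by (auto simp: complex_nonpos_Reals_iff)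
  qed
  have ident: "T * (cmod (1 + w * cis t))\<^sup>2 = 1 + (cmod (s + cis t))\<^sup>2 * P" for t
  proof -
    have sc: "(sin t)\<^sup>2 + (cos t)\<^sup>2 = 1" by simp
    have ha: "a = (Re s)\<^sup>2 + (Im s)\<^sup>2" by (simp add: a_def m_def cmod_power2)
    have re: "Re (1 + w * cis t) = 1 + P / T * (Re s * cos t + Im s * sin t)"
      by (simp add: w_def algebra_simps add_divide_distrib diff_divide_distrib)
    have im: "Im (1 + w * cis t) = P / T * (Re s * sin t - Im s * cos t)"
      by (simp add: w_def algebra_simps add_divide_distrib diff_divide_distrib)
    have "T * (cmod (1 + w * cis t))\<^sup>2 = T * ((1 + P / T * (Re s * cos t + Im s * sin t))\<^sup>2 + (P / T * (Re s * sin t - Im s * cos t))\<^sup>2)"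
      by (simp only: cmod_power2 re im)
    also have "\<dots> = 1 + ((cmod s)\<^sup>2 + 1 + 2 * (Re s * cos t + Im s * sin t)) * P"
      unfolding m_def[symmetric] a_def[symmetric]
      using ha quad T0 unfolding A_def apply (simp add: field_simps power2_eq_square)
      using sc unfolding power2_eq_square by algebra
    finally show ?thesis unfolding cmod_add_cis_sq .
  qed
  have eq: "(\<lambda>t. log b (1 + (cmod (s + cis t))\<^sup>2 * P)) = (\<lambda>t. Re (g (cis t)))"
  proof
    fix t
    have "cmod (w * cis t) < 1" using w1 by (simp add: norm_mult)
    then have "Re (1 + w * cis t) > 0" by (rule Re_pos)
    then have nz: "1 + w * cis t \<noteq> 0" by (metis less_irrefl zero_complex.sel(1))
    have "log b (1 + (cmod (s + cis t))\<^sup>2 * P) = log b (T * (cmod (1 + w * cis t))\<^sup>2)"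
      by (simp add: ident)
    also have "\<dots> = log b T + 2 * log b (cmod (1 + w * cis t))"
      using T0 nz b by (simp add: log_mult log_nat_power)
    also have "\<dots> = Re (g (cis t))"
      using nz by (simp add: g_def log_def)
    finally show "log b (1 + (cmod (s + cis t))\<^sup>2 * P) = Re (g (cis t))" .
  qed
  have "log b (1 + (cmod s)\<^sup>2 * P) < log b T"
  proof -
    have "0 < 1 + (cmod s)\<^sup>2 * P" using P by (simp add: add_pos_nonneg)
    then show ?thesis
      using T_gt b P T0 by (subst log_less_cancel_iff) (auto simp: a_def m_def mult.commute)
  qed
  then show ?thesis unfolding eq using circle_mean[OF hol r1] by (simp add: g_def)
qed


lemma cis_borel: "cis \<in> borel_measurable borel"
  by (rule borel_measurable_continuous_onI) (intro continuous_intros)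

lemma borel_measurable_cis[measurable]: "f \<in> borel_measurable M \<Longrightarrow> (\<lambda>x. cis (f x)) \<in> borel_measurable M"
  using measurable_compose[OF _ cis_borel] by blast

lemma step_lemma:
  fixes M :: "'a measure" and \<theta> :: "nat \<Rightarrow> 'a \<Rightarrow> real" and F :: "complex \<Rightarrow> real"
  assumes M: "prob_space M"
    and ind: "prob_space.indep_vars M (\<lambda>_. borel) \<theta> {1..}"
    and dist: "\<And>l. l \<ge> 1 \<Longrightarrow> distr M borel (\<theta> l) = uniform_measure lborel {0<..<2*pi}"
    and F[measurable]: "F \<in> borel_measurable borel"
    and bnd: "\<And>z. cmod z \<le> real (Suc i) \<Longrightarrow> \<bar>F z\<bar> \<le> C"
  shows "integrable (distr M borel (\<lambda>\<omega>. \<Sum>l=1..i. cis (\<theta> l \<omega>)))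
            (\<lambda>s. \<integral>t. F (s + cis t) \<partial>uniform_measure lborel {0<..<2*pi})
     \<and> (\<integral>\<omega>. F (\<Sum>l=1..Suc i. cis (\<theta> l \<omega>)) \<partial>M) =
       (\<integral>s. (\<integral>t. F (s + cis t) \<partial>uniform_measure lborel {0<..<2*pi}) \<partial>distr M borel (\<lambda>\<omega>. \<Sum>l=1..i. cis (\<theta> l \<omega>)))"
proof -
  interpret prob_space M by (rule M)
  define U where "U = uniform_measure lborel {0<..<2*pi}"
  define S where "S = (\<lambda>\<omega>. \<Sum>l=1..i. cis (\<theta> l \<omega>))"
  define N where "N = distr M borel S"
  have rv[measurable]: "\<theta> l \<in> borel_measurable M" if "l \<ge> 1" for l
    using ind that unfolding indep_vars_def by auto
  have Sm[measurable]: "S \<in> borel_measurable M"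
    unfolding S_def by (intro borel_measurable_sum) auto
  have Y1[measurable]: "(\<lambda>x. \<Sum>l=1..i. cis (x l)) \<in> borel_measurable (PiM {1..i} (\<lambda>_. borel))"
    by (intro borel_measurable_sum borel_measurable_cis measurable_component_singleton) auto
  have Y2: "(\<lambda>x. complex_of_real (x (Suc i))) \<in> borel_measurable (PiM {Suc i} (\<lambda>_. (borel :: real measure)))"
    by measurable
  have "prob_space.indep_var M (borel :: complex measure) ((\<lambda>x. \<Sum>l=1..i. cis (x l)) \<circ> (\<lambda>\<omega>. restrict (\<lambda>l. \<theta> l \<omega>) {1..i}))
                  (borel :: complex measure) ((\<lambda>x :: nat \<Rightarrow> real. complex_of_real (x (Suc i))) \<circ> (\<lambda>\<omega>. restrict (\<lambda>l. \<theta> l \<omega>) {Suc i}))"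
    by (intro indep_var_compose[OF indep_var_restrict[OF ind]] Y1 Y2) auto
  also have "((\<lambda>x. \<Sum>l=1..i. cis (x l)) \<circ> (\<lambda>\<omega>. restrict (\<lambda>l. \<theta> l \<omega>) {1..i})) = S"
    unfolding S_def by (auto simp: fun_eq_iff intro!: sum.cong)
  also have "((\<lambda>x :: nat \<Rightarrow> real. complex_of_real (x (Suc i))) \<circ> (\<lambda>\<omega>. restrict (\<lambda>l. \<theta> l \<omega>) {Suc i})) = (\<lambda>\<omega>. complex_of_real (\<theta> (Suc i) \<omega>))"
    by (auto simp: fun_eq_iff)
  finally have indep: "prob_space.indep_var M (borel :: complex measure) S (borel :: complex measure) (\<lambda>\<omega>. complex_of_real (\<theta> (Suc i) \<omega>))" .
  define V where "V = distr U (borel :: complex measure) complex_of_real"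
  have dV: "distr M borel (\<lambda>\<omega>. complex_of_real (\<theta> (Suc i) \<omega>)) = V"
  proof -
    have "distr M borel (\<lambda>\<omega>. complex_of_real (\<theta> (Suc i) \<omega>)) = distr (distr M borel (\<theta> (Suc i))) borel complex_of_real"
      by (subst distr_distr) (auto simp: o_def)
    moreover have "distr M borel (\<theta> (Suc i)) = U" unfolding U_def by (rule dist) simp
    ultimately show ?thesis unfolding V_def by simp
  qed
  have NU: "N \<Otimes>\<^sub>M V = distr M (borel \<Otimes>\<^sub>M borel) (\<lambda>x. (S x, complex_of_real (\<theta> (Suc i) x)))"
    using indep unfolding indep_var_distribution_eq N_def dV by simp
  interpret N: prob_space N unfolding N_def by (rule prob_space_distr) simp
  interpret U: prob_space U unfolding U_def by (rule prob_space_uniform_measure) auto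
  have ofm: "complex_of_real \<in> borel_measurable U"
    unfolding U_def by (subst measurable_cong_sets[OF sets_uniform_measure refl]) simp
  interpret V: prob_space V unfolding V_def by (rule U.prob_space_distr) (rule ofm)
  interpret NU: pair_prob_space N V ..
  define H where "H = (\<lambda>p :: complex \<times> complex. F (fst p + cis (Re (snd p))))"
  have Hm[measurable]: "H \<in> borel_measurable (borel \<Otimes>\<^sub>M borel)"
    unfolding H_def by measurable
  have Sb: "cmod (S \<omega> + cis (\<theta> (Suc i) \<omega>)) \<le> real (Suc i)" for \<omega>
  proof -
    have "cmod (S \<omega> + cis (\<theta> (Suc i) \<omega>)) \<le> cmod (S \<omega>) + 1"
      using norm_triangle_ineq[of "S \<omega>" "cis (\<theta> (Suc i) \<omega>)"] by simp
    also have "cmod (S \<omega>) \<le> (\<Sum>l=1..i. cmod (cis (\<theta> l \<omega>)))"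
      unfolding S_def by (rule norm_sum)
    finally show ?thesis by simp
  qed
  have intM: "integrable M (\<lambda>\<omega>. H (S \<omega>, complex_of_real (\<theta> (Suc i) \<omega>)))"
    by (rule integrable_const_bound[where B=C]) (auto simp: H_def intro!: bnd Sb)
  have intNU: "integrable (N \<Otimes>\<^sub>M V) H"
    unfolding NU by (subst integrable_distr_eq) (auto simp: intM)
  have "(\<integral>\<omega>. F (\<Sum>l=1..Suc i. cis (\<theta> l \<omega>)) \<partial>M) = (\<integral>\<omega>. H (S \<omega>, complex_of_real (\<theta> (Suc i) \<omega>)) \<partial>M)"
    by (simp add: H_def S_def)
  also have "\<dots> = integral\<^sup>L (N \<Otimes>\<^sub>M V) H"
    unfolding NU by (subst integral_distr) auto
  also have "\<dots> = (\<integral>s. (\<integral>t. H (s, t) \<partial>V) \<partial>N)"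
    by (rule NU.integral_fst'[OF intNU, symmetric])
  also have inner: "(\<lambda>s. (\<integral>t. H (s, t) \<partial>V)) = (\<lambda>s. \<integral>t. F (s + cis t) \<partial>U)"
    unfolding V_def H_def by (subst integral_distr) (auto simp: ofm)
  finally show ?thesis
    using NU.integrable_fst'[OF intNU] unfolding inner N_def U_def S_def by simp
qed



lemma ln_chord:
  fixes \<tau> Y :: real
  assumes "0 \<le> \<tau>" "\<tau> \<le> 1" "0 \<le> Y"
  shows "\<tau> * ln (1 + Y) \<le> ln (1 + \<tau> * Y)"
proof -
  have "(1 - \<tau>) * ln 1 + \<tau> * ln (1 + Y) \<le> ln ((1 - \<tau>) *\<^sub>R 1 + \<tau> *\<^sub>R (1 + Y))"
    using assms by (intro concave_onD[OF ln_concave]) auto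
  then show ?thesis by (simp add: algebra_simps)
qed

lemma log_quad_lower:
  fixes b P m x :: real
  assumes b: "1 < b" and P: "0 < P" and m: "0 < m" and x: "0 \<le> x"
  shows "log b (1 + P * m / 2) * (2 * x / m - x\<^sup>2 / m\<^sup>2) \<le> log b (1 + x * P)"
proof -
  define c where "c = log b (1 + P * m / 2)"
  have pm: "0 < P * m / 2" using P m by simp
  have c0: "0 \<le> c" unfolding c_def using b pm by (subst zero_le_log_cancel_iff) auto
  have q1: "2 * x / m - x\<^sup>2 / m\<^sup>2 \<le> 1"
  proof -
    have "0 \<le> (x / m - 1)\<^sup>2" by simp
    also have "(x / m - 1)\<^sup>2 = 1 - (2 * x / m - x\<^sup>2 / m\<^sup>2)"
      using m by (simp add: power2_eq_square field_simps)
    finally show ?thesis by simp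
  qed
  show ?thesis
  proof (cases "x \<ge> m / 2")
    case True
    have "c * (2 * x / m - x\<^sup>2 / m\<^sup>2) \<le> c * 1" using c0 q1 by (intro mult_left_mono) auto
    also have "c \<le> log b (1 + x * P)"
      unfolding c_def using b P m True by (subst log_le_cancel_iff) (auto simp: mult.commute intro!: mult_left_mono add_pos_nonneg)
    finally show ?thesis unfolding c_def by simp
  next
    case False
    define \<tau> where "\<tau> = 2 * x / m"
    have t0: "0 \<le> \<tau>" "\<tau> \<le> 1" unfolding \<tau>_def using m x False by (auto simp: field_simps)
    have "c * (2 * x / m - x\<^sup>2 / m\<^sup>2) \<le> c * \<tau>"
      unfolding \<tau>_def using c0 m by (intro mult_left_mono) auto
    also have "c * \<tau> = \<tau> * ln (1 + P * m / 2) / ln b" unfolding c_def log_def by simp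
    also have "\<dots> \<le> ln (1 + \<tau> * (P * m / 2)) / ln b"
      using b P m t0 by (intro divide_right_mono ln_chord) auto
    also have "1 + \<tau> * (P * m / 2) = 1 + x * P" unfolding \<tau>_def using m by (simp add: field_simps)
    finally show ?thesis unfolding c_def log_def by simp
  qed
qed


theorem proposition3:
  fixes M :: "'a measure" and \<theta> :: "nat \<Rightarrow> 'a \<Rightarrow> real" and b P :: real
  assumes "prob_space M"
    and "b > 1"
    and "P > 0"
    and "prob_space.indep_vars M (\<lambda>_. borel) \<theta> {1..}"
    and "\<And>l. l \<ge> 1 \<Longrightarrow> distr M borel (\<theta> l) = uniform_measure lborel {0<..<2*pi}"
  shows "(\<forall>i. Rbar M \<theta> b P (Suc i) > Rbar M \<theta> b P i) \<and> filterlim (Rbar M \<theta> b P) at_top sequentially"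
proof -
  interpret prob_space M by (rule assms(1))
  have b: "1 < b" and P: "0 < P" using assms(2,3) .
  define U where "U = uniform_measure lborel {0<..<2*pi}"
  define S where "S = (\<lambda>i \<omega>. \<Sum>l=1..i. cis (\<theta> l \<omega>))"
  have rv: "\<theta> l \<in> borel_measurable M" if "l \<ge> 1" for l
    using assms(4) that unfolding indep_vars_def by auto
  have Sm[measurable]: "S i \<in> borel_measurable M" for i
    unfolding S_def by (intro borel_measurable_sum borel_measurable_cis rv) auto
  have Sb: "cmod (S i \<omega>) \<le> real i" for i \<omega>
  proof -
    have "cmod (S i \<omega>) \<le> (\<Sum>l=1..i. cmod (cis (\<theta> l \<omega>)))"
      unfolding S_def by (rule norm_sum)
    then show ?thesis by simp
  qed
  have intS: "integrable M (\<lambda>\<omega>. f (S i \<omega>))"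
    if fm: "f \<in> borel_measurable borel" and fb: "\<And>z. cmod z \<le> real i \<Longrightarrow> \<bar>f z\<bar> \<le> C" for f :: "complex \<Rightarrow> real" and i C
    by (rule integrable_const_bound[where B=C]) (use fm fb Sb in auto)
  define N where "N = (\<lambda>i. distr M borel (S i))"
  have probN: "prob_space (N i)" for i unfolding N_def by (rule prob_space_distr) simp
  have distr_int: "integral\<^sup>L (N i) f = (\<integral>\<omega>. f (S i \<omega>) \<partial>M)" if "f \<in> borel_measurable borel" for f :: "complex \<Rightarrow> real" and i
    unfolding N_def using that by (subst integral_distr) auto
  have step: "integrable (N i) (\<lambda>s. \<integral>t. f (s + cis t) \<partial>U) \<and>
     (\<integral>\<omega>. f (S (Suc i) \<omega>) \<partial>M) = (\<integral>s. (\<integral>t. f (s + cis t) \<partial>U) \<partial>N i)"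
    if "f \<in> borel_measurable borel" "\<And>z. cmod z \<le> real (Suc i) \<Longrightarrow> \<bar>f z\<bar> \<le> C" for f :: "complex \<Rightarrow> real" and i C
    using step_lemma[OF assms(1) assms(4) assms(5) that] unfolding N_def S_def U_def by simp
  define F where "F = (\<lambda>z::complex. log b (1 + (cmod z)\<^sup>2 * P))"
  have Fm[measurable]: "F \<in> borel_measurable borel" unfolding F_def by measurable
  have Fb: "\<bar>F z\<bar> \<le> log b (1 + (real n)\<^sup>2 * P)" if "cmod z \<le> real n" for z n
  proof -
    have "0 \<le> (cmod z)\<^sup>2 * P" using P by simp
    then have "0 \<le> F z" unfolding F_def using b by (subst zero_le_log_cancel_iff) auto
    moreover have "(cmod z)\<^sup>2 \<le> (real n)\<^sup>2" using that by (simp add: power_mono)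
    then have "F z \<le> log b (1 + (real n)\<^sup>2 * P)"
      unfolding F_def using b P by (subst log_le_cancel_iff) (auto intro!: add_pos_nonneg)
    ultimately show ?thesis by simp
  qed
  have R_eq: "Rbar M \<theta> b P i = (\<integral>\<omega>. F (S i \<omega>) \<partial>M)" for i
    unfolding Rbar_def F_def S_def ..
  have part1: "Rbar M \<theta> b P (Suc i) > Rbar M \<theta> b P i" for i
  proof -
    interpret Ni: prob_space "N i" by (rule probN)
    have st: "integrable (N i) (\<lambda>s. \<integral>t. F (s + cis t) \<partial>U) \<and>
       (\<integral>\<omega>. F (S (Suc i) \<omega>) \<partial>M) = (\<integral>s. (\<integral>t. F (s + cis t) \<partial>U) \<partial>N i)"
      by (rule step[OF Fm Fb])
    have intF: "integrable (N i) F"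
      unfolding N_def by (subst integrable_distr_eq) (auto intro!: intS[OF Fm Fb])
    have "integral\<^sup>L (N i) F < (\<integral>s. (\<integral>t. F (s + cis t) \<partial>U) \<partial>N i)"
    proof (rule Ni.integral_less_AE_space[OF intF conjunct1[OF st]])
      show "AE x in N i. F x < (\<integral>t. F (x + cis t) \<partial>U)"
        using circle_log[OF b P] unfolding F_def U_def by simp
    qed (simp add: Ni.emeasure_space_1)
    then show ?thesis unfolding R_eq using st distr_int[OF Fm] by simp
  qed
  define Z where "Z = (\<lambda>i \<omega>. (cmod (S i \<omega>))\<^sup>2)"
  have f2m[measurable]: "(\<lambda>z::complex. (cmod z)\<^sup>2) \<in> borel_measurable borel" by measurable
  have f4m[measurable]: "(\<lambda>z::complex. ((cmod z)\<^sup>2)\<^sup>2) \<in> borel_measurable borel" by measurable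
  have f2b: "\<bar>(cmod z)\<^sup>2\<bar> \<le> (real n)\<^sup>2" if "cmod z \<le> real n" for z :: complex and n
    using that by (simp add: power_mono)
  have f4b: "\<bar>((cmod z)\<^sup>2)\<^sup>2\<bar> \<le> ((real n)\<^sup>2)\<^sup>2" if "cmod z \<le> real n" for z :: complex and n
    using that by (simp add: power_mono)
  have intZ: "integrable M (Z i)" for i
    unfolding Z_def by (rule intS[OF f2m f2b])
  have intZ2: "integrable M (\<lambda>\<omega>. (Z i \<omega>)\<^sup>2)" for i
    unfolding Z_def by (rule intS[OF f4m f4b])
  have EZ: "(\<integral>\<omega>. Z i \<omega> \<partial>M) = real i" for i
  proof (induction i)
    case 0
    then show ?case by (simp add: Z_def S_def)
  next
    case (Suc i)
    have st: "(\<integral>\<omega>. (cmod (S (Suc i) \<omega>))\<^sup>2 \<partial>M) = (\<integral>s. (\<integral>t. (cmod (s + cis t))\<^sup>2 \<partial>U) \<partial>N i)"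
      using step[OF f2m f2b] by blast
    have cs: "(\<lambda>s. \<integral>t. (cmod (s + cis t))\<^sup>2 \<partial>U) = (\<lambda>s. (cmod s)\<^sup>2 + 1)"
      using circle_sq unfolding U_def by auto
    have "(\<integral>\<omega>. Z (Suc i) \<omega> \<partial>M) = (\<integral>s. (cmod s)\<^sup>2 + 1 \<partial>N i)"
      unfolding Z_def st cs ..
    also have "\<dots> = (\<integral>\<omega>. Z i \<omega> + 1 \<partial>M)"
      unfolding Z_def by (subst distr_int) auto
    also have "\<dots> = real i + 1" using intZ Suc by (simp add: prob_space)
    finally show ?case by simp
  qed
  have EZ2: "(\<integral>\<omega>. (Z i \<omega>)\<^sup>2 \<partial>M) = 2 * (real i)\<^sup>2 - real i" for i
  proof (induction i)
    case 0
    then show ?case by (simp add: Z_def S_def)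
  next
    case (Suc i)
    have st: "(\<integral>\<omega>. ((cmod (S (Suc i) \<omega>))\<^sup>2)\<^sup>2 \<partial>M) = (\<integral>s. (\<integral>t. ((cmod (s + cis t))\<^sup>2)\<^sup>2 \<partial>U) \<partial>N i)"
      using step[OF f4m f4b] by blast
    have cs: "(\<lambda>s. \<integral>t. ((cmod (s + cis t))\<^sup>2)\<^sup>2 \<partial>U) = (\<lambda>s. ((cmod s)\<^sup>2 + 1)\<^sup>2 + 2 * (cmod s)\<^sup>2)"
      using circle_four unfolding U_def by auto
    have "(\<integral>\<omega>. (Z (Suc i) \<omega>)\<^sup>2 \<partial>M) = (\<integral>s. ((cmod s)\<^sup>2 + 1)\<^sup>2 + 2 * (cmod s)\<^sup>2 \<partial>N i)"
      unfolding Z_def st cs ..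
    also have "\<dots> = (\<integral>\<omega>. (Z i \<omega> + 1)\<^sup>2 + 2 * Z i \<omega> \<partial>M)"
      unfolding Z_def by (subst distr_int) auto
    also have "\<dots> = (\<integral>\<omega>. (Z i \<omega>)\<^sup>2 + (4 * Z i \<omega> + 1) \<partial>M)"
      by (intro Bochner_Integration.integral_cong) (auto simp: power2_eq_square algebra_simps)
    also have "\<dots> = (\<integral>\<omega>. (Z i \<omega>)\<^sup>2 \<partial>M) + (4 * (\<integral>\<omega>. Z i \<omega> \<partial>M) + 1)"
      using intZ intZ2 by (simp add: prob_space)
    also have "\<dots> = 2 * (real (Suc i))\<^sup>2 - real (Suc i)"
      unfolding Suc EZ by (simp add: power2_eq_square algebra_simps)
    finally show ?case .
  qed
  have lower: "log b (1 + P * real i) / 2 \<le> Rbar M \<theta> b P i" if i1: "i \<ge> 1" for i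
  proof -
    define m where "m = 2 * real i"
    have m0: "0 < m" unfolding m_def using i1 by simp
    define c where "c = log b (1 + P * m / 2)"
    have c_eq: "c = log b (1 + P * real i)" unfolding c_def m_def by simp
    have c0: "0 \<le> c" unfolding c_eq using b P by (subst zero_le_log_cancel_iff) (auto intro!: add_pos_nonneg)
    have pw: "c * (2 * Z i \<omega> / m - (Z i \<omega>)\<^sup>2 / m\<^sup>2) \<le> F (S i \<omega>)" for \<omega>
      unfolding c_def F_def Z_def by (rule log_quad_lower[OF b P m0]) simp
    have intF: "integrable M (\<lambda>\<omega>. F (S i \<omega>))" by (rule intS[OF Fm Fb])
    have intL: "integrable M (\<lambda>\<omega>. c * (2 * Z i \<omega> / m - (Z i \<omega>)\<^sup>2 / m\<^sup>2))"
      using intZ intZ2 by auto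
    have "(\<integral>\<omega>. c * (2 * Z i \<omega> / m - (Z i \<omega>)\<^sup>2 / m\<^sup>2) \<partial>M) \<le> (\<integral>\<omega>. F (S i \<omega>) \<partial>M)"
      by (rule integral_mono[OF intL intF pw])
    moreover have "(\<integral>\<omega>. c * (2 * Z i \<omega> / m - (Z i \<omega>)\<^sup>2 / m\<^sup>2) \<partial>M) = c * (2 * real i / m - (2 * (real i)\<^sup>2 - real i) / m\<^sup>2)"
      using intZ intZ2 by (simp add: EZ EZ2)
    moreover have "c * (2 * real i / m - (2 * (real i)\<^sup>2 - real i) / m\<^sup>2) \<ge> c / 2"
    proof -
      have "2 * real i / m - (2 * (real i)\<^sup>2 - real i) / m\<^sup>2 = 1/2 + 1 / (4 * real i)"
        unfolding m_def using i1 by (simp add: field_simps power2_eq_square)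
      moreover have "0 \<le> 1 / (4 * real i)" by simp
      ultimately have "1/2 \<le> 2 * real i / m - (2 * (real i)\<^sup>2 - real i) / m\<^sup>2" by linarith
      then have "c * (1/2) \<le> c * (2 * real i / m - (2 * (real i)\<^sup>2 - real i) / m\<^sup>2)"
        using c0 by (intro mult_left_mono)
      then show ?thesis by simp
    qed
    ultimately show ?thesis unfolding R_eq c_eq[symmetric] by linarith
  qed
  have lim: "filterlim (\<lambda>i::nat. log b (1 + P * real i) / 2) at_top sequentially"
    using b P by real_asymp
  have "filterlim (Rbar M \<theta> b P) at_top sequentially"
    by (rule filterlim_at_top_mono[OF lim]) (use lower in \<open>auto intro: eventually_sequentiallyI[of 1]\<close>)
  then show ?thesis using part1 by blast
qed

end
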